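(* Let $n\ge3$. Then the map $\gamma\colon\mathbb{R}\to\mathcal{C}^1$ is injective (i.e. $\gamma$ is an embedded bi-infinite path).
   Context: Let $\mathbf{k}$ be a field of characteristic zero; $\mathrm{Tame}(\mathbf{k}^3)=\langle \mathrm{GL}_3(\mathbf{k})\ltimes\mathbf{k}^3,\ \{(x_1+P(x_2,x_3),x_2,x_3)\}\rangle$. For $r\in\{1,2,3\}$ a vertex of type $r$ is an orbit $[f_1,\dots,f_r]$, under post-composition by $\mathrm{GL}_r(\mathbf{k})\ltimes\mathbf{k}^r$, of the first $r$ components of an element $(f_1,f_2,f_3)\in\mathrm{Tame}(\mathbf{k}^3)$. $\mathcal{C}$ is the 2-dimensional simplicial complex on these vertices with triangles $[f_1],[f_1,f_2],[f_1,f_2,f_3]$ for $(f_1,f_2,f_3)\in\mathrm{Tame}(\mathbf{k}^3)$, with 1-skeleton $\mathcal{C}^1$; $\mathrm{Tame}(\mathbf{k}^3)$ acts by $g\cdot[f_1,\dots,f_r]=[f_1\circ g^{-1},\dots,f_r\circ g^{-1}]$. Let $g^{-1}=(x_2,x_1+x_2x_3,x_3)$, $h^{-1}=(x_3,x_1,x_2)$, $f=g^n\circ h$. Define $\gamma\colon\mathbb{R}\to\mathcal{C}^1$ by $\gamma(0)=[x_1]$, $\gamma(1)=[x_1,x_3]$, $\gamma(2)=[x_3]$, $\gamma[0,2]$ the length 2 path through them (parametrised by arc length), and $\gamma[2k,2k+2]=f^k\cdot\gamma[0,2]$ for $k\in\mathbb{Z}$. *)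

theory Defs
  imports Complex_Main
begin

text \<open>Points of k^3 are triples. Since char k = 0, k is infinite, so polynomial maps
are faithfully represented by the functions they induce.\<close>

type_synonym 'k pt = "'k \<times> 'k \<times> 'k"

definition coord :: "nat \<Rightarrow> 'k pt \<Rightarrow> 'k" where
  "coord i p = (case p of (a, b, c) \<Rightarrow> (if i = 0 then a else if i = 1 then b else c))"

inductive_set poly2 :: "('k::field_char_0 \<Rightarrow> 'k \<Rightarrow> 'k) set" where
  const: "(\<lambda>x y. c) \<in> poly2"
| var1: "(\<lambda>x y. x) \<in> poly2"
| var2: "(\<lambda>x y. y) \<in> poly2"
| add: "P \<in> poly2 \<Longrightarrow> Q \<in> poly2 \<Longrightarrow> (\<lambda>x y. P x y + Q x y) \<in> poly2"
| mult: "P \<in> poly2 \<Longrightarrow> Q \<in> poly2 \<Longrightarrow> (\<lambda>x y. P x y * Q x y) \<in> poly2"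

definition invertible_mat :: "nat \<Rightarrow> (nat \<Rightarrow> nat \<Rightarrow> 'k::field) \<Rightarrow> bool" where
  "invertible_mat r A \<longleftrightarrow> (\<exists>B. \<forall>i<r. \<forall>j<r.
      (\<Sum>l<r. A i l * B l j) = (if i = j then 1 else 0) \<and>
      (\<Sum>l<r. B i l * A l j) = (if i = j then 1 else 0))"

definition affine3 :: "('k::field_char_0 pt \<Rightarrow> 'k pt) set" where
  "affine3 = {F. \<exists>A c. invertible_mat 3 A \<and>
      (\<forall>p i. i < 3 \<longrightarrow> coord i (F p) = (\<Sum>j<3. A i j * coord j p) + c i)}"

definition elementary3 :: "('k::field_char_0 pt \<Rightarrow> 'k pt) set" where
  "elementary3 = {F. \<exists>P \<in> poly2. F = (\<lambda>(x1, x2, x3). (x1 + P x2 x3, x2, x3))}"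

inductive_set Tame :: "('k::field_char_0 pt \<Rightarrow> 'k pt) set" where
  aff: "F \<in> affine3 \<Longrightarrow> F \<in> Tame"
| elem: "F \<in> elementary3 \<Longrightarrow> F \<in> Tame"
| comp: "F \<in> Tame \<Longrightarrow> G \<in> Tame \<Longrightarrow> F \<circ> G \<in> Tame"
| inverse: "F \<in> Tame \<Longrightarrow> inv F \<in> Tame"

text \<open>Orbit [f_1,...,f_r] of an r-tuple of functions under post-composition by
GL_r(k) \<ltimes> k^r.  Vertices are represented by these orbits (sets of lists).\<close>
type_synonym 'k vertex = "('k pt \<Rightarrow> 'k) list set"

definition orbit :: "('k::field_char_0 pt \<Rightarrow> 'k) list \<Rightarrow> 'k vertex" where
  "orbit fs = {map (\<lambda>i x. (\<Sum>j<length fs. A i j * (fs ! j) x) + c i) [0..<length fs]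
                 | A c. invertible_mat (length fs) A}"

definition vertices :: "'k::field_char_0 vertex set" where
  "vertices = {orbit (map (\<lambda>i. coord i \<circ> F) [0..<r]) | F r. F \<in> Tame \<and> 1 \<le> r \<and> r \<le> 3}"

definition g_inv :: "'k::field_char_0 pt \<Rightarrow> 'k pt" where
  "g_inv = (\<lambda>(x1, x2, x3). (x2, x1 + x2 * x3, x3))"
definition g_map :: "'k::field_char_0 pt \<Rightarrow> 'k pt" where
  "g_map = (\<lambda>(x1, x2, x3). (x2 - x1 * x3, x1, x3))"
definition h_inv :: "'k::field_char_0 pt \<Rightarrow> 'k pt" where
  "h_inv = (\<lambda>(x1, x2, x3). (x3, x1, x2))"
definition h_map :: "'k::field_char_0 pt \<Rightarrow> 'k pt" where
  "h_map = (\<lambda>(x1, x2, x3). (x2, x3, x1))"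

definition f_map :: "nat \<Rightarrow> 'k::field_char_0 pt \<Rightarrow> 'k pt" where
  "f_map n = (g_map ^^ n) \<circ> h_map"
definition f_inv :: "nat \<Rightarrow> 'k::field_char_0 pt \<Rightarrow> 'k pt" where
  "f_inv n = h_inv \<circ> (g_inv ^^ n)"

definition f_pow :: "nat \<Rightarrow> int \<Rightarrow> 'k::field_char_0 pt \<Rightarrow> 'k pt" where
  "f_pow n k = (if 0 \<le> k then f_map n ^^ nat k else f_inv n ^^ nat (- k))"

text \<open>Action of a (bijective) map \<phi> on vertices, given by \<phi>^{-1}:
  \<phi> \<cdot> [f_1,...,f_r] = [f_1 \<circ> \<phi>^{-1}, ..., f_r \<circ> \<phi>^{-1}].\<close>
definition act_by_inv :: "('k pt \<Rightarrow> 'k pt) \<Rightarrow> ('k::field_char_0 pt \<Rightarrow> 'k) list \<Rightarrow> 'k vertex" where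
  "act_by_inv \<phi>inv fs = orbit (map (\<lambda>fi. fi \<circ> \<phi>inv) fs)"

text \<open>Integer vertices of \<gamma>: \<gamma>(2k) = f^k\<cdot>[x1], \<gamma>(2k+1) = f^k\<cdot>[x1,x3].\<close>
definition gamma_vertex :: "nat \<Rightarrow> int \<Rightarrow> 'k::field_char_0 vertex" where
  "gamma_vertex n m =
     (let k = m div 2 in
      if even m then act_by_inv (f_pow n (- k)) [coord 0]
      else act_by_inv (f_pow n (- k)) [coord 0, coord 2])"

text \<open>Points of the geometric realisation of \<C>^1 are represented by barycentric
coordinates (functions vertex \<Rightarrow> real).  \<gamma> is the arc-length parametrised
piecewise-linear path through consecutive vertices (each edge has length 1).\<close>
definition gamma :: "nat \<Rightarrow> real \<Rightarrow> ('k::field_char_0 vertex \<Rightarrow> real)" where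
  "gamma n t = (let m = \<lfloor>t\<rfloor>; s = t - of_int m in
     (\<lambda>v. (if v = gamma_vertex n m then 1 - s else 0)
        + (if v = gamma_vertex n (m + 1) then s else 0)))"

end

theory Submission
  imports Defs
begin


definition gg :: "'a::comm_ring_1 \<times> 'a \<times> 'a \<Rightarrow> 'a \<times> 'a \<times> 'a" where
  "gg = (\<lambda>(x1,x2,x3). (x2 - x1*x3, x1, x3))"
definition hh :: "'a::comm_ring_1 \<times> 'a \<times> 'a \<Rightarrow> 'a \<times> 'a \<times> 'a" where
  "hh = (\<lambda>(x1,x2,x3). (x2,x3,x1))"
definition ff :: "nat \<Rightarrow> 'a::comm_ring_1 \<times> 'a \<times> 'a \<Rightarrow> 'a \<times> 'a \<times> 'a" where
  "ff n = (gg ^^ n) \<circ> hh"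

lemma f_map_ff: "f_map n = ff n"
  unfolding f_map_def ff_def g_map_def gg_def h_map_def hh_def ..

definition ofi :: "int \<times> int \<times> int \<Rightarrow> 'a::comm_ring_1 \<times> 'a \<times> 'a" where
  "ofi = (\<lambda>(a,b,c). (of_int a, of_int b, of_int c))"

lemma gg_ofi: "gg (ofi p) = ofi (gg p)"
  by (cases p) (simp add: gg_def ofi_def)
lemma hh_ofi: "hh (ofi p) = ofi (hh p)"
  by (cases p) (simp add: hh_def ofi_def)
lemma ggn_ofi: "(gg^^k) (ofi p) = ofi ((gg^^k) p)"
  by (induction k) (simp_all add: gg_ofi)
lemma ff_ofi: "ff n (ofi p) = ofi (ff n p)"
  by (simp add: ff_def hh_ofi ggn_ofi)
lemma ffd_ofi: "(ff n^^k) (ofi p) = ofi ((ff n^^k) p)"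
  by (induction k) (simp_all add: ff_ofi)

definition S :: "int \<times> int \<times> int \<Rightarrow> bool" where
  "S = (\<lambda>(a,b,c). a*b*c \<le> 0)"

lemma abs_diff_neg: "(x::int) * y \<le> 0 \<Longrightarrow> \<bar>x - y\<bar> = \<bar>x\<bar> + \<bar>y\<bar>"
  by (auto simp: abs_if mult_le_0_iff)

definition Gi :: "int \<times> int \<times> int \<Rightarrow> int \<times> int \<times> int \<Rightarrow> bool" where
  "Gi = (\<lambda>(a,b,c) (a',b',c'). S (a,b,c) \<and> S (a',b',c') \<and> \<bar>a\<bar> \<le> \<bar>a'\<bar> \<and> \<bar>b\<bar> \<le> \<bar>b'\<bar>
     \<and> \<bar>c\<bar> \<le> \<bar>c'\<bar> \<and> 1 \<le> \<bar>a\<bar> \<and> 1 \<le> \<bar>c\<bar> \<and> (\<bar>a\<bar> < \<bar>a'\<bar> \<or> \<bar>c\<bar> < \<bar>c'\<bar>))"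

lemma S_gg: "S (a,b,c) \<Longrightarrow> S (gg (a,b,c))"
proof -
  assume "S (a,b,c)"
  then have "a*b*c \<le> 0" by (simp add: S_def)
  moreover have "(b - a*c)*a*c = a*b*c - (a*c)^2" by (simp add: algebra_simps power2_eq_square)
  moreover have "(a*c)^2 \<ge> 0" by simp
  ultimately have "(b - a*c)*a*c \<le> 0" by linarith
  then show ?thesis by (simp add: S_def gg_def)
qed

lemma Gi_step:
  assumes "Gi (a,b,c) (a',b',c')"
  shows "Gi (gg (a,b,c)) (gg (a',b',c')) \<and> \<bar>b - a*c\<bar> < \<bar>b' - a'*c'\<bar> \<and> 1 \<le> \<bar>a\<bar>"
proof -
  from assms have s: "S (a,b,c)" "S (a',b',c')" and le: "\<bar>a\<bar> \<le> \<bar>a'\<bar>" "\<bar>b\<bar> \<le> \<bar>b'\<bar>" "\<bar>c\<bar> \<le> \<bar>c'\<bar>"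
    and one: "1 \<le> \<bar>a\<bar>" "1 \<le> \<bar>c\<bar>" and st: "\<bar>a\<bar> < \<bar>a'\<bar> \<or> \<bar>c\<bar> < \<bar>c'\<bar>"
    by (auto simp: Gi_def)
  have e1: "\<bar>b - a*c\<bar> = \<bar>b\<bar> + \<bar>a\<bar>*\<bar>c\<bar>"
    using s(1) by (subst abs_diff_neg) (auto simp: S_def abs_mult algebra_simps)
  have e2: "\<bar>b' - a'*c'\<bar> = \<bar>b'\<bar> + \<bar>a'\<bar>*\<bar>c'\<bar>"
    using s(2) by (subst abs_diff_neg) (auto simp: S_def abs_mult algebra_simps)
  have m: "\<bar>a\<bar>*\<bar>c\<bar> < \<bar>a'\<bar>*\<bar>c'\<bar>"
    using st
  proof
    assume "\<bar>a\<bar> < \<bar>a'\<bar>"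
    then show ?thesis using le one by (intro mult_less_le_imp_less) auto
  next
    assume "\<bar>c\<bar> < \<bar>c'\<bar>"
    then show ?thesis using le one by (intro mult_le_less_imp_less) auto
  qed
  have "\<bar>b - a*c\<bar> < \<bar>b' - a'*c'\<bar>" using e1 e2 m le by simp
  moreover have "1 \<le> \<bar>b - a*c\<bar>"
  proof -
    have "1*1 \<le> \<bar>a\<bar>*\<bar>c\<bar>" using one by (intro mult_mono) auto
    then show ?thesis using e1 by linarith
  qed
  ultimately show ?thesis using S_gg[OF s(1)] S_gg[OF s(2)] le one
    by (auto simp: Gi_def gg_def)
qed

lemma Gi_iter: "Gi p q \<Longrightarrow> Gi ((gg^^k) p) ((gg^^k) q)"
proof (induction k)
  case 0 then show ?case by simp
next
  case (Suc k)
  obtain a b c where p: "(gg^^k) p = (a,b,c)" by (cases "(gg^^k) p") auto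
  obtain a' b' c' where q: "(gg^^k) q = (a',b',c')" by (cases "(gg^^k) q") auto
  show ?case using Gi_step[of a b c a' b' c'] Suc p q by simp
qed

lemma Gi_iter_strict:
  assumes "Gi p q"
  shows "\<exists>a b c a' b' c'. (gg^^Suc k) p = (a,b,c) \<and> (gg^^Suc k) q = (a',b',c') \<and>
     Gi (a,b,c) (a',b',c') \<and> \<bar>a\<bar> < \<bar>a'\<bar> \<and> 1 \<le> \<bar>b\<bar>"
proof -
  obtain a b c where p: "(gg^^k) p = (a,b,c)" by (cases "(gg^^k) p") auto
  obtain a' b' c' where q: "(gg^^k) q = (a',b',c')" by (cases "(gg^^k) q") auto
  have "Gi (a,b,c) (a',b',c')" using Gi_iter[OF assms, of k] p q by simp
  from Gi_step[OF this] show ?thesis using p q by (simp add: gg_def)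
qed

definition Fi :: "int \<times> int \<times> int \<Rightarrow> int \<times> int \<times> int \<Rightarrow> bool" where
  "Fi = (\<lambda>(a,b,c) (a',b',c'). S (a,b,c) \<and> S (a',b',c') \<and> \<bar>a\<bar> \<le> \<bar>a'\<bar> \<and> \<bar>b\<bar> \<le> \<bar>b'\<bar>
     \<and> \<bar>c\<bar> \<le> \<bar>c'\<bar> \<and> 1 \<le> \<bar>a\<bar> \<and> 1 \<le> \<bar>b\<bar> \<and> 1 \<le> \<bar>c\<bar> \<and> (\<bar>a\<bar> < \<bar>a'\<bar> \<or> \<bar>b\<bar> < \<bar>b'\<bar>))"

lemma Fi_step:
  assumes "Fi p q" "n \<ge> 1"
  shows "Fi (ff n p) (ff n q) \<and> \<bar>fst (ff n p)\<bar> < \<bar>fst (ff n q)\<bar>"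
proof -
  obtain a b c where p: "p = (a,b,c)" by (cases p) auto
  obtain a' b' c' where q: "q = (a',b',c')" by (cases q) auto
  have "Gi (hh p) (hh q)" using assms(1) unfolding p q
    by (auto simp: Fi_def Gi_def hh_def S_def algebra_simps)
  moreover obtain k where n: "n = Suc k" using assms(2) by (cases n) auto
  ultimately obtain x y z x' y' z' where r: "(gg^^n) (hh p) = (x,y,z)" "(gg^^n) (hh q) = (x',y',z')"
     "Gi (x,y,z) (x',y',z')" "\<bar>x\<bar> < \<bar>x'\<bar>" "1 \<le> \<bar>y\<bar>"
    using Gi_iter_strict by blast
  then show ?thesis by (auto simp: ff_def Fi_def Gi_def)
qed

lemma Fi_iter: "Fi p q \<Longrightarrow> n \<ge> 1 \<Longrightarrow> Fi ((ff n^^k) p) ((ff n^^k) q)"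
  by (induction k) (simp_all add: Fi_step)

lemma int_key:
  assumes "n \<ge> 1"
  shows "fst ((ff n^^Suc k) (1,-1,1)) \<noteq> fst ((ff n^^Suc k) (1::int,-2,1))"
proof -
  have "Fi (1,-1,1) (1,-2,1)" by (simp add: Fi_def S_def)
  from Fi_iter[OF this assms, of k] have "Fi ((ff n^^k) (1,-1,1)) ((ff n^^k) (1,-2,1))" .
  from Fi_step[OF this assms] show ?thesis by auto
qed



lemma g_inv_map: "g_map (g_inv x) = x" "g_inv (g_map x) = x"
  by (cases x; simp add: g_map_def g_inv_def)+

lemma gn_inv1: "(g_map^^k) ((g_inv^^k) x) = x"
proof (induction k arbitrary: x)
  case (Suc k)
  have e1: "(g_inv^^Suc k) x = g_inv ((g_inv^^k) x)" by (simp only: funpow.simps(2) comp_apply)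
  have e2: "(g_map^^Suc k) y = (g_map^^k) (g_map y)" for y by (simp only: funpow_Suc_right comp_apply)
  show ?case unfolding e1 e2 g_inv_map by (rule Suc.IH)
qed simp

lemma gn_inv2: "(g_inv^^k) ((g_map^^k) x) = x"
proof (induction k arbitrary: x)
  case (Suc k)
  have e1: "(g_map^^Suc k) x = g_map ((g_map^^k) x)" by (simp only: funpow.simps(2) comp_apply)
  have e2: "(g_inv^^Suc k) y = (g_inv^^k) (g_inv y)" for y by (simp only: funpow_Suc_right comp_apply)
  show ?case unfolding e1 e2 g_inv_map by (rule Suc.IH)
qed simp

lemmas gn_inv = gn_inv1 gn_inv2

lemma h_inv_map: "h_map (h_inv y) = y" "h_inv (h_map y) = y"
  by (cases y; simp add: h_map_def h_inv_def)+

lemma f_inv_map: "f_map n (f_inv n x) = x" "f_inv n (f_map n x) = x"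
  by (simp only: f_map_def f_inv_def comp_apply h_inv_map gn_inv)+

lemma f_pow_succ: "f_pow n (a+1) x = f_map n (f_pow n a x)"
proof (cases "a \<ge> 0")
  case True
  then have "nat (a+1) = Suc (nat a)" by simp
  then show ?thesis using True by (simp add: f_pow_def)
next
  case False
  define m where "m = nat (-(a+1))"
  have a: "nat (-a) = Suc m" using False by (simp add: m_def)
  have "f_pow n (a+1) x = (f_inv n ^^ m) x" using False by (auto simp: f_pow_def m_def)
  moreover have "f_pow n a x = f_inv n ((f_inv n ^^ m) x)" using False a by (simp add: f_pow_def)
  ultimately show ?thesis by (simp add: f_inv_map)
qed

lemma f_pow_pred: "f_pow n (a-1) x = f_inv n (f_pow n a x)"
proof (cases "a \<ge> 1")
  case True
  define m where "m = nat (a-1)"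
  have a: "nat a = Suc m" using True by (simp add: m_def)
  have "f_pow n (a-1) x = (f_map n ^^ m) x" using True by (auto simp: f_pow_def m_def)
  moreover have "f_pow n a x = f_map n ((f_map n ^^ m) x)" using True a by (simp add: f_pow_def)
  ultimately show ?thesis by (simp add: f_inv_map)
next
  case False
  then have e: "nat (- (a - 1)) = Suc (nat (-a))" by simp
  have "f_pow n a x = (f_inv n ^^ nat (-a)) x" using False by (cases "a = 0") (auto simp: f_pow_def)
  then show ?thesis using False e by (simp add: f_pow_def)
qed

lemma f_pow_add: "f_pow n (a + b) x = f_pow n b (f_pow n a x)"
proof (induction b arbitrary: x rule: int_induct[where k=0])
  case base then show ?case by (simp add: f_pow_def)
next
  case (step1 i) then show ?case
    by (metis add.assoc f_pow_succ)
next
  case (step2 i) then show ?case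
    by (metis add_diff_eq f_pow_pred)
qed

lemma coord_ofi0: "coord 0 (ofi p :: 'k::comm_ring_1 pt) = of_int (fst p)"
  by (cases p) (simp add: coord_def ofi_def)
lemma coord_ofi2: "coord 2 (ofi p :: 'k::comm_ring_1 pt) = of_int (snd (snd p))"
  by (cases p) (simp add: coord_def ofi_def)

lemma key_k:
  assumes "n \<ge> 1" "d \<ge> 1"
  shows "\<exists>u u' :: 'k::field_char_0 pt. coord 0 u = coord 0 u' \<and> coord 2 u = coord 2 u' \<and>
     coord 0 ((f_map n^^d) u) \<noteq> coord 0 ((f_map n^^d) u')"
proof -
  obtain k where d: "d = Suc k" using assms(2) by (cases d) auto
  let ?u = "ofi (1,-1,1) :: 'k pt" and ?u' = "ofi (1,-2,1) :: 'k pt"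
  have "coord 0 ((f_map n^^d) ?u) \<noteq> coord 0 ((f_map n^^d) ?u')"
    unfolding f_map_ff ffd_ofi coord_ofi0 of_int_eq_iff d using int_key[OF assms(1)] .
  moreover have "coord 0 ?u = coord 0 ?u'" "coord 2 ?u = coord 2 ?u'"
    by (simp_all add: coord_ofi0 coord_ofi2)
  ultimately show ?thesis by blast
qed

lemma no_rel:
  assumes "n \<ge> 1" "k < l"
    and rel: "\<forall>x. coord 0 (f_pow n (-k) x) = \<alpha> * coord 0 (f_pow n (-l) x)
                 + \<beta> * coord 2 (f_pow n (-l) x) + \<gamma>"
  shows False
proof -
  define d where "d = nat (l - k)"
  have d1: "d \<ge> 1" using assms(2) by (simp add: d_def)
  obtain u u' :: "'a pt" where uu: "coord 0 u = coord 0 u'" "coord 2 u = coord 2 u'"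
     "coord 0 ((f_map n^^d) u) \<noteq> coord 0 ((f_map n^^d) u')"
    using key_k[OF assms(1) d1] by blast
  have A: "f_pow n (-k) (f_pow n l v) = (f_map n ^^ d) v" for v
    using f_pow_add[of n l "-k" v, symmetric] assms(2) by (simp add: f_pow_def d_def)
  have B: "f_pow n (-l) (f_pow n l v) = v" for v
    using f_pow_add[of n l "-l" v, symmetric] by (simp add: f_pow_def)
  have "coord 0 ((f_map n^^d) u) = \<alpha> * coord 0 u + \<beta> * coord 2 u + \<gamma>"
    using rel[rule_format, of "f_pow n l u"] unfolding A B .
  moreover have "coord 0 ((f_map n^^d) u') = \<alpha> * coord 0 u' + \<beta> * coord 2 u' + \<gamma>"
    using rel[rule_format, of "f_pow n l u'"] unfolding A B .
  ultimately show False using uu by simp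
qed



lemma delta_sum: "(i::nat) < r \<Longrightarrow> (\<Sum>l<r. (if i = l then (1::'a::comm_ring_1) else 0) * f l) = f i"
proof -
  assume "i < r"
  have "(\<Sum>l<r. (if i = l then (1::'a) else 0) * f l) = (\<Sum>l<r. if l = i then f l else 0)"
    by (rule sum.cong) auto
  also have "\<dots> = f i" using \<open>i < r\<close> by (subst sum.delta) auto
  finally show ?thesis .
qed

lemma orbit_self: "fs \<in> orbit fs"
proof -
  let ?A = "\<lambda>i j. if i = j then (1::'a) else 0"
  have inv: "invertible_mat (length fs) ?A"
    unfolding invertible_mat_def
    by (rule exI[of _ ?A]) (simp add: delta_sum[where f = "\<lambda>l. if l = j then 1 else 0" for j])
  have "map (\<lambda>i x. (\<Sum>j<length fs. ?A i j * (fs ! j) x) + 0) [0..<length fs] = fs"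
    by (rule nth_equalityI) (auto simp: delta_sum[where f = "\<lambda>j. (fs ! j) x" for x])
  then have "\<exists>A c. fs = map (\<lambda>i x. (\<Sum>j<length fs. A i j * (fs ! j) x) + c i) [0..<length fs]
      \<and> invertible_mat (length fs) A"
    using inv by (intro exI[of _ ?A] exI[of _ "\<lambda>_. 0::'a"]) simp
  then show ?thesis unfolding orbit_def by blast
qed

lemma orbit_len: "gs \<in> orbit fs \<Longrightarrow> length gs = length fs"
  by (auto simp: orbit_def)

lemma orbit1: "gs \<in> orbit [p] \<Longrightarrow> \<exists>a c. \<forall>x. (gs!0) x = a * p x + c"
proof -
  assume "gs \<in> orbit [p]"
  then obtain A c where "gs = [\<lambda>x. A 0 0 * p x + c 0]" by (auto simp: orbit_def)
  then have "\<forall>x. (gs!0) x = A 0 0 * p x + c 0" by simp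
  then show ?thesis by blast
qed

lemma orbit2: "gs \<in> orbit [p,q] \<Longrightarrow> \<exists>a b c. \<forall>x. (gs!0) x = a * p x + b * q x + c"
proof -
  assume "gs \<in> orbit [p,q]"
  then obtain A c where "(gs!0) = (\<lambda>x. A 0 0 * p x + A 0 (Suc 0) * q x + c 0)"
    by (auto simp: orbit_def numeral_2_eq_2)
  then have "\<forall>x. (gs!0) x = A 0 0 * p x + A 0 (Suc 0) * q x + c 0" by simp
  then show ?thesis by blast
qed

lemma V1_inj:
  assumes "n \<ge> 1" "orbit [coord 0 \<circ> f_pow n (-k)] = (orbit [coord 0 \<circ> f_pow n (-l)] :: 'a::field_char_0 vertex)"
  shows "k = l"
proof (rule ccontr)
  assume ne: "k \<noteq> l"
  have m: "[coord 0 \<circ> f_pow n (-k)] \<in> orbit [coord 0 \<circ> (f_pow n (-l) :: 'a pt \<Rightarrow> 'a pt)]"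
          "[coord 0 \<circ> f_pow n (-l)] \<in> orbit [coord 0 \<circ> (f_pow n (-k) :: 'a pt \<Rightarrow> 'a pt)]"
    using orbit_self assms(2) by metis+
  show False
  proof (cases "k < l")
    case True
    from orbit1[OF m(1)] obtain a c where "\<forall>x. coord 0 (f_pow n (-k) x) = a * coord 0 (f_pow n (-l) x) + (c::'a)"
      by auto
    then have "\<forall>x. coord 0 (f_pow n (-k) x) = a * coord 0 (f_pow n (-l) x) + 0 * coord 2 (f_pow n (-l) x) + c"
      by simp
    then show False using no_rel[OF assms(1) True] by blast
  next
    case False
    then have lt: "l < k" using ne by simp
    from orbit1[OF m(2)] obtain a c where "\<forall>x. coord 0 (f_pow n (-l) x) = a * coord 0 (f_pow n (-k) x) + (c::'a)"
      by auto
    then have "\<forall>x. coord 0 (f_pow n (-l) x) = a * coord 0 (f_pow n (-k) x) + 0 * coord 2 (f_pow n (-k) x) + c"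
      by simp
    then show False using no_rel[OF assms(1) lt] by blast
  qed
qed

lemma V2_inj:
  assumes "n \<ge> 1" "orbit [coord 0 \<circ> f_pow n (-k), coord 2 \<circ> f_pow n (-k)]
     = (orbit [coord 0 \<circ> f_pow n (-l), coord 2 \<circ> f_pow n (-l)] :: 'a::field_char_0 vertex)"
  shows "k = l"
proof (rule ccontr)
  assume ne: "k \<noteq> l"
  have m: "[coord 0 \<circ> f_pow n (-k), coord 2 \<circ> f_pow n (-k)] \<in> orbit [coord 0 \<circ> f_pow n (-l), coord 2 \<circ> (f_pow n (-l) :: 'a pt \<Rightarrow> 'a pt)]"
          "[coord 0 \<circ> f_pow n (-l), coord 2 \<circ> f_pow n (-l)] \<in> orbit [coord 0 \<circ> f_pow n (-k), coord 2 \<circ> (f_pow n (-k) :: 'a pt \<Rightarrow> 'a pt)]"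
    using orbit_self assms(2) by metis+
  show False
  proof (cases "k < l")
    case True
    from orbit2[OF m(1)] obtain a b c where "\<forall>x. coord 0 (f_pow n (-k) x) = a * coord 0 (f_pow n (-l) x) + b * coord 2 (f_pow n (-l) x) + (c::'a)"
      by auto
    then show False using no_rel[OF assms(1) True] by blast
  next
    case False
    then have lt: "l < k" using ne by simp
    from orbit2[OF m(2)] obtain a b c where "\<forall>x. coord 0 (f_pow n (-l) x) = a * coord 0 (f_pow n (-k) x) + b * coord 2 (f_pow n (-k) x) + (c::'a)"
      by auto
    then show False using no_rel[OF assms(1) lt] by blast
  qed
qed

lemma gv_inj:
  assumes "n \<ge> 1" "gamma_vertex n m1 = (gamma_vertex n m2 :: 'a::field_char_0 vertex)"
  shows "m1 = m2"
proof -
  have len: False if "orbit [p] = orbit [q, r]" for p q r :: "'a pt \<Rightarrow> 'a"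
    using orbit_len[of "[p]" "[q,r]"] orbit_self[of "[p]"] that by auto
  show ?thesis
  proof (cases "even m1")
    case e1: True
    show ?thesis
    proof (cases "even m2")
      case True
      then have "m1 div 2 = m2 div 2" using e1 assms V1_inj[OF assms(1), where 'a='a]
        by (simp add: gamma_vertex_def act_by_inv_def)
      then show ?thesis using e1 True by (metis dvd_mult_div_cancel)
    next
      case False
      then show ?thesis using e1 assms len by (simp add: gamma_vertex_def act_by_inv_def Let_def) (metis len)
    qed
  next
    case o1: False
    show ?thesis
    proof (cases "even m2")
      case True
      then show ?thesis using o1 assms len by (simp add: gamma_vertex_def act_by_inv_def Let_def) (metis len)
    next
      case False
      then have "m1 div 2 = m2 div 2" using o1 assms V2_inj[OF assms(1), where 'a='a]
        by (simp add: gamma_vertex_def act_by_inv_def Let_def)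
      then show ?thesis using o1 False
        by (metis odd_two_times_div_two_succ)
    qed
  qed
qed

theorem corollary7p5:
  fixes n :: nat
  assumes "n \<ge> 3"
  shows "inj (gamma n :: real \<Rightarrow> ('k::field_char_0 vertex \<Rightarrow> real))"
proof (rule injI)
  fix t1 t2 :: real
  assume eq: "(gamma n t1 :: 'k vertex \<Rightarrow> real) = gamma n t2"
  let ?V = "gamma_vertex n :: int \<Rightarrow> 'k vertex"
  have n1: "n \<ge> 1" using assms by simp
  have Vi: "?V a = ?V b \<longleftrightarrow> a = b" for a b using gv_inj[OF n1] by blast
  define m1 where "m1 = \<lfloor>t1\<rfloor>"
  define m2 where "m2 = \<lfloor>t2\<rfloor>"
  define s1 where "s1 = t1 - of_int m1"
  define s2 where "s2 = t2 - of_int m2"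
  have s1: "0 \<le> s1" "s1 < 1" unfolding s1_def m1_def by linarith+
  have s2: "0 \<le> s2" "s2 < 1" unfolding s2_def m2_def by linarith+
  have G1: "gamma n t1 v = (if v = ?V m1 then 1 - s1 else 0) + (if v = ?V (m1+1) then s1 else 0)" for v
    by (simp add: gamma_def Let_def m1_def s1_def)
  have G2: "gamma n t2 v = (if v = ?V m2 then 1 - s2 else 0) + (if v = ?V (m2+1) then s2 else 0)" for v
    by (simp add: gamma_def Let_def m2_def s2_def)
  have a: "m1 = m2 \<or> m1 = m2 + 1"
  proof -
    have "gamma n t1 (?V m1) = 1 - s1" using G1 Vi by simp
    then have "gamma n t2 (?V m1) > 0" using eq s1 by simp
    then show ?thesis using G2[of "?V m1"] Vi by (auto split: if_splits)
  qed
  have b: "m2 = m1 \<or> m2 = m1 + 1"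
  proof -
    have "gamma n t2 (?V m2) = 1 - s2" using G2 Vi by simp
    then have "gamma n t1 (?V m2) > 0" using eq s2 by simp
    then show ?thesis using G1[of "?V m2"] Vi by (auto split: if_splits)
  qed
  have m: "m1 = m2" using a b by linarith
  have "gamma n t1 (?V (m1+1)) = s1" using G1 Vi by simp
  moreover have "gamma n t2 (?V (m1+1)) = s2" using G2 Vi m by simp
  ultimately have "s1 = s2" using eq by simp
  then show "t1 = t2" using m unfolding s1_def s2_def by simp
qed


end
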